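(* Under the standing setup and Assumption 1, $$E\big\|\sqrt n(\widehat{\bm p}-\bm p)-\sqrt n\,\bm U\big\|_2^2\to0,$$ where $\|\cdot\|_2$ is the Euclidean norm on $\mathbb R^d$.
   Context: **Setup.** Fix $d\ge1$ and two treatment groups $g=1,2$. There are $n=n_c+n_1+n_2$ mutually independent subjects. - Each of $n_c$ "complete" subjects $j=1,\dots,n_c$ yields a pair $(\bm X_{1j}^{(c)},\bm X_{2j}^{(c)})$ of $\mathbb R^d$-valued vectors, one per group. These pairs are i.i.d. over $j$; the components may be arbitrarily dependent. - Each of $n_1$ subjects yields only a group-1 vector $\bm X_{1k}^{(i)}$, and each of $n_2$ subjects yields only a group-2 vector $\bm X_{2k}^{(i)}$. - Within group $g$, all vectors (complete or incomplete) have the same joint distribution. - $X_{gk}^{(A)(l)}$ is the $l$-th component, $A\in\{c,i\}$. **Marginals and effect sizes.** $F_g^{(l)}(x)=\tfrac12[P(X\le x)+P(X<x)]$ is the normalized distribution function of the $l$-th marginal in group $g$ (non-degenerate). Set $p^{(l)}=\int F_1^{(l)}\,dF_2^{(l)}$ and $\bm p=(p^{(1)},\dots,p^{(d)})^\top$. **Estimator.** Let $m_g=n_c+n_g$ and let $c(x)=0,\tfrac12,1$ according as $x<0$, $x=0$, $x>0$. Define $$\widehat F_g^{(l)}(x)=\frac1{m_g}\Big[\sum_{k=1}^{n_c}c\big(x-X_{gk}^{(c)(l)}\big)+\sum_{k=1}^{n_g}c\big(x-X_{gk}^{(i)(l)}\big)\Big],\qquad \widehat p^{(l)}=\int\widehat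 F_1^{(l)}\,d\widehat F_2^{(l)},$$ and $\widehat{\bm p}=(\widehat p^{(1)},\dots,\widehat p^{(d)})^\top$. **Asymptotically equivalent statistic.** Define $Y_{1k}^{(A)(l)}=F_2^{(l)}(X_{1k}^{(A)(l)})$ and $Y_{2k}^{(A)(l)}=F_1^{(l)}(X_{2k}^{(A)(l)})$. Let $$U^{(l)}=\frac1{m_2}\sum_{k=1}^{n_c}Y_{2k}^{(c)(l)}-\frac1{m_1}\sum_{k=1}^{n_c}Y_{1k}^{(c)(l)}+\frac1{m_2}\sum_{k=1}^{n_2}Y_{2k}^{(i)(l)}-\frac1{m_1}\sum_{k=1}^{n_1}Y_{1k}^{(i)(l)}+1-2p^{(l)},$$ and $\bm U=(U^{(1)},\dots,U^{(d)})^\top$. **Assumption 1.** $n_c+n_g\to\infty$ and $n/(n_c+n_g)\le N_0<\infty$ for $g=1,2$. *)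

theory Defs
  imports "HOL-Probability.Probability"
begin

definition cfun :: "real \<Rightarrow> real" where
  "cfun x = (if x < 0 then 0 else if x = 0 then 1/2 else 1)"

definition normcdf :: "real measure \<Rightarrow> real \<Rightarrow> real" where
  "normcdf P x = (measure P {..x} + measure P {..<x}) / 2"

definition marg1 :: "((real^'d) \<times> (real^'d)) measure \<Rightarrow> 'd \<Rightarrow> real measure" where
  "marg1 Pc l = distr Pc borel (\<lambda>z. fst z $ l)"

definition marg2 :: "((real^'d) \<times> (real^'d)) measure \<Rightarrow> 'd \<Rightarrow> real measure" where
  "marg2 Pc l = distr Pc borel (\<lambda>z. snd z $ l)"

definition pvec :: "((real^'d) \<times> (real^'d)) measure \<Rightarrow> real^'d" where
  "pvec Pc = (\<chi> l. integral\<^sup>L (marg2 Pc l) (normcdf (marg1 Pc l)))"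

definition Fhat :: "nat \<Rightarrow> (nat \<Rightarrow> real) \<Rightarrow> nat \<Rightarrow> (nat \<Rightarrow> real) \<Rightarrow> real \<Rightarrow> real" where
  "Fhat nc xc ni xi x =
     ((\<Sum>k<nc. cfun (x - xc k)) + (\<Sum>k<ni. cfun (x - xi k))) / real (nc + ni)"

text \<open>The estimator \<open>p_hat\<close>: integral of the empirical F_1 with respect to the
  empirical F_2, i.e. the average of \<open>F_1 hat\<close> over the group-2 observations.\<close>
definition phat :: "nat \<Rightarrow> nat \<Rightarrow> nat \<Rightarrow> (nat \<Rightarrow> (real^'d) \<times> (real^'d))
    \<Rightarrow> (nat \<Rightarrow> real^'d) \<Rightarrow> (nat \<Rightarrow> real^'d) \<Rightarrow> real^'d" where
  "phat nc n1 n2 xc x1 x2 = (\<chi> l.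
     let F1 = Fhat nc (\<lambda>k. fst (xc k) $ l) n1 (\<lambda>k. x1 k $ l)
     in ((\<Sum>k<nc. F1 (snd (xc k) $ l)) + (\<Sum>k<n2. F1 (x2 k $ l))) / real (nc + n2))"

definition Uvec :: "((real^'d) \<times> (real^'d)) measure \<Rightarrow> nat \<Rightarrow> nat \<Rightarrow> nat \<Rightarrow> (nat \<Rightarrow> (real^'d) \<times> (real^'d))
    \<Rightarrow> (nat \<Rightarrow> real^'d) \<Rightarrow> (nat \<Rightarrow> real^'d) \<Rightarrow> real^'d" where
  "Uvec Pc nc n1 n2 xc x1 x2 = (\<chi> l.
     let F1 = normcdf (marg1 Pc l); F2 = normcdf (marg2 Pc l);
         m1 = real (nc + n1); m2 = real (nc + n2)
     in (\<Sum>k<nc. F1 (snd (xc k) $ l)) / m2 - (\<Sum>k<nc. F2 (fst (xc k) $ l)) / m1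
        + (\<Sum>k<n2. F1 (x2 k $ l)) / m2 - (\<Sum>k<n1. F2 (x1 k $ l)) / m1
        + 1 - 2 * pvec Pc $ l)"

end

theory Submission
  imports Defs
begin


lemma cfun_ge0: "0 \<le> cfun x" and cfun_le1: "cfun x \<le> 1"
  by (auto simp: cfun_def)

lemma cfun_neg: "cfun x + cfun (- x) = 1"
  by (auto simp: cfun_def)

lemma cfun_meas[measurable]: "cfun \<in> borel_measurable borel"
  unfolding cfun_def[abs_def] by measurable

lemma cfun_ind: "cfun (b - a) = (indicator {..b} a + indicator {..<b} a) / 2"
  by (auto simp: cfun_def indicator_def)

lemma normcdf_mono:
  assumes "prob_space P" "sets P = sets borel"
  shows "mono (normcdf P)"
proof -
  interpret prob_space P by fact
  show ?thesis unfolding mono_def normcdf_def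
  proof (intro allI impI)
    fix x y :: real assume "x \<le> y"
    have "measure P {..x} \<le> measure P {..y}" using \<open>x \<le> y\<close> assms(2)
      by (intro finite_measure_mono) (auto simp: sets_eq_imp_space_eq)
    moreover have "measure P {..<x} \<le> measure P {..<y}" using \<open>x \<le> y\<close> assms(2)
      by (intro finite_measure_mono) (auto simp: sets_eq_imp_space_eq)
    ultimately show "(measure P {..x} + measure P {..<x}) / 2 \<le> (measure P {..y} + measure P {..<y}) / 2"
      by simp
  qed
qed

lemma normcdf_meas:
  assumes "prob_space P" "sets P = sets borel"
  shows "normcdf P \<in> borel_measurable borel"
  by (rule borel_measurable_mono[OF normcdf_mono[OF assms]])

lemma normcdf_ge0: "0 \<le> normcdf P x"
  by (simp add: normcdf_def)

lemma normcdf_le1: "prob_space P \<Longrightarrow> normcdf P x \<le> 1"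
proof -
  assume "prob_space P"
  then have "measure P {..x} \<le> 1" "measure P {..<x} \<le> 1" by (auto intro: prob_space.prob_le_1)
  then show ?thesis unfolding normcdf_def by simp
qed

lemma int_cfun1:
  assumes "prob_space P" "sets P = sets borel"
  shows "(\<integral>a. cfun (b - a) \<partial>P) = normcdf P b"
proof -
  interpret prob_space P by fact
  have sp: "space P = UNIV" using assms(2) sets_eq_imp_space_eq by fastforce
  have m1: "{..b} \<in> sets P" "{..<b} \<in> sets P" using assms(2) by auto
  have "(\<integral>a. cfun (b - a) \<partial>P) = (\<integral>a. (indicator {..b} a + indicator {..<b} a) / 2 \<partial>P)"
    by (simp add: cfun_ind)
  also have "\<dots> = ((\<integral>a. indicator {..b} a \<partial>P) + (\<integral>a. indicator {..<b} a \<partial>P)) / 2"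
    using m1 by (subst integral_divide_zero, subst Bochner_Integration.integral_add) (auto simp: integrable_indicator_iff emeasure_eq_measure)
  also have "\<dots> = normcdf P b" using m1 sp by (simp add: normcdf_def)
  finally show ?thesis .
qed

lemma int_cfun2:
  assumes "prob_space P" "sets P = sets borel"
  shows "(\<integral>b. cfun (b - a) \<partial>P) = 1 - normcdf P a"
proof -
  interpret prob_space P by fact
  have "(\<integral>b. cfun (b - a) \<partial>P) = (\<integral>b. 1 - cfun (a - b) \<partial>P)"
    by (intro Bochner_Integration.integral_cong) (auto simp: cfun_def)
  also have "\<dots> = 1 - (\<integral>b. cfun (a - b) \<partial>P)"
    using assms(2) by (subst Bochner_Integration.integral_diff)
       (auto intro!: integrable_const_bound[where B=1] simp: cfun_ge0 cfun_le1 measurable_cong_sets[OF assms(2) refl] prob_space)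
  also have "\<dots> = 1 - normcdf P a" using int_cfun1[OF assms] by simp
  finally show ?thesis .
qed




definition hh :: "real measure \<Rightarrow> real measure \<Rightarrow> real \<Rightarrow> real \<Rightarrow> real" where
  "hh P1 P2 a b = cfun (b - a) - normcdf P1 b - (1 - normcdf P2 a) + (\<integral>x. normcdf P1 x \<partial>P2)"

locale twoP =
  fixes P1 P2 :: "real measure"
  assumes p1: "prob_space P1" and p2: "prob_space P2"
    and s1: "sets P1 = sets borel" and s2: "sets P2 = sets borel"
begin

lemma F1m[measurable]: "normcdf P1 \<in> borel_measurable borel"
  by (rule normcdf_meas[OF p1 s1])
lemma F2m[measurable]: "normcdf P2 \<in> borel_measurable borel"
  by (rule normcdf_meas[OF p2 s2])

lemma int_bdd:
  fixes f :: "_ \<Rightarrow> real"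
  assumes "prob_space P" "f \<in> borel_measurable P" "\<And>x. \<bar>f x\<bar> \<le> B"
  shows "integrable P f"
proof -
  interpret prob_space P by fact
  show ?thesis using assms by (intro integrable_const_bound[where B=B]) auto
qed

lemma fubini: "(\<integral>a. normcdf P2 a \<partial>P1) = 1 - (\<integral>b. normcdf P1 b \<partial>P2)"
proof -
  interpret P1: prob_space P1 by (rule p1)
  interpret P2: prob_space P2 by (rule p2)
  interpret pair_sigma_finite P1 P2 by unfold_locales
  have sp: "sets (P1 \<Otimes>\<^sub>M P2) = sets (borel \<Otimes>\<^sub>M borel)" using s1 s2 by (intro sets_pair_measure_cong) auto
  have meas: "(\<lambda>(a, b). cfun (b - a)) \<in> borel_measurable (P1 \<Otimes>\<^sub>M P2)"
    unfolding measurable_cong_sets[OF sp refl] by measurable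
  have int: "integrable (P1 \<Otimes>\<^sub>M P2) (\<lambda>(a, b). cfun (b - a))"
    using meas
    by (intro finite_measure.integrable_const_bound[where B=1])
       (auto simp: finite_measure_pair_measure P1.finite_measure_axioms P2.finite_measure_axioms abs_le_iff
          intro!: always_eventually split: prod.splits intro: order_trans[OF _ cfun_ge0] cfun_le1)
  have "(\<integral>b. (\<integral>a. cfun (b - a) \<partial>P1) \<partial>P2) = (\<integral>a. (\<integral>b. cfun (b - a) \<partial>P2) \<partial>P1)"
    using Fubini_integral[of "\<lambda>a b. cfun (b - a)"] int by simp
  also have "(\<integral>b. (\<integral>a. cfun (b - a) \<partial>P1) \<partial>P2) = (\<integral>b. normcdf P1 b \<partial>P2)"
    by (simp add: int_cfun1[OF p1 s1])
  also have "(\<integral>a. (\<integral>b. cfun (b - a) \<partial>P2) \<partial>P1) = (\<integral>a. 1 - normcdf P2 a \<partial>P1)"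
    by (simp add: int_cfun2[OF p2 s2])
  also have "\<dots> = 1 - (\<integral>a. normcdf P2 a \<partial>P1)"
    by (subst Bochner_Integration.integral_diff)
       (auto intro!: int_bdd[OF p1, where B=1] simp: measurable_cong_sets[OF s1 refl] normcdf_ge0 normcdf_le1[OF p2] P1.prob_space abs_le_iff
          intro: order_trans[OF _ normcdf_ge0])
  finally show ?thesis by simp
qed

lemma p_bounds: "0 \<le> (\<integral>x. normcdf P1 x \<partial>P2)" "(\<integral>x. normcdf P1 x \<partial>P2) \<le> 1"
proof -
  interpret P2: prob_space P2 by (rule p2)
  show "0 \<le> (\<integral>x. normcdf P1 x \<partial>P2)" by (simp add: normcdf_ge0)
  show "(\<integral>x. normcdf P1 x \<partial>P2) \<le> 1"
    by (rule P2.integral_le_const) (auto intro!: int_bdd[OF p2, where B=1] simp: measurable_cong_sets[OF s2 refl] normcdf_ge0 normcdf_le1[OF p1] abs_le_iff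
          intro: order_trans[OF _ normcdf_ge0])
qed

lemma hh_bound: "\<bar>hh P1 P2 a b\<bar> \<le> 2"
  using p_bounds cfun_ge0[of "b - a"] cfun_le1[of "b - a"] normcdf_ge0[of P1 b] normcdf_le1[OF p1, of b]
    normcdf_ge0[of P2 a] normcdf_le1[OF p2, of a]
  unfolding hh_def by linarith

lemma hh_meas[measurable]: "(\<lambda>(a, b). hh P1 P2 a b) \<in> borel_measurable (borel \<Otimes>\<^sub>M borel)"
  unfolding hh_def by measurable

lemma hh_meas2:
  assumes [measurable]: "f \<in> borel_measurable M" "g \<in> borel_measurable M"
  shows "(\<lambda>x. hh P1 P2 (f x) (g x)) \<in> borel_measurable M"
  unfolding hh_def by measurable

lemma hh_int_b: "(\<integral>b. hh P1 P2 a b \<partial>P2) = 0"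
proof -
  interpret P2: prob_space P2 by (rule p2)
  have i1: "integrable P2 (\<lambda>b. cfun (b - a))"
    by (intro int_bdd[OF p2, where B=1]) (auto simp: measurable_cong_sets[OF s2 refl] abs_le_iff cfun_le1 intro: order_trans[OF _ cfun_ge0])
  have i2: "integrable P2 (normcdf P1)"
    by (intro int_bdd[OF p2, where B=1]) (auto simp: measurable_cong_sets[OF s2 refl] abs_le_iff normcdf_le1[OF p1] intro: order_trans[OF _ normcdf_ge0])
  show ?thesis unfolding hh_def
    using i1 i2 int_cfun2[OF p2 s2, of a] by (simp add: P2.prob_space)
qed

lemma hh_int_a: "(\<integral>a. hh P1 P2 a b \<partial>P1) = 0"
proof -
  interpret P1: prob_space P1 by (rule p1)
  have i1: "integrable P1 (\<lambda>a. cfun (b - a))"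
    by (intro int_bdd[OF p1, where B=1]) (auto simp: measurable_cong_sets[OF s1 refl] abs_le_iff cfun_le1 intro: order_trans[OF _ cfun_ge0])
  have i2: "integrable P1 (normcdf P2)"
    by (intro int_bdd[OF p1, where B=1]) (auto simp: measurable_cong_sets[OF s1 refl] abs_le_iff normcdf_le1[OF p2] intro: order_trans[OF _ normcdf_ge0])
  show ?thesis unfolding hh_def
    using i1 i2 int_cfun1[OF p1 s1, of b] fubini by (simp add: P1.prob_space)
qed

end



lemma (in prob_space) indep_zero:
  fixes \<Phi> :: "'b \<Rightarrow> 'b \<Rightarrow> real"
  assumes ind: "indep_var S X T Y"
    and \<Phi>m: "(\<lambda>(x, y). \<Phi> x y) \<in> borel_measurable (S \<Otimes>\<^sub>M T)"
    and bd: "\<And>x y. \<bar>\<Phi> x y\<bar> \<le> B"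
    and inner: "\<And>y. y \<in> space T \<Longrightarrow> (\<integral>x. \<Phi> x y \<partial>distr M S X) = 0"
  shows "expectation (\<lambda>\<omega>. \<Phi> (X \<omega>) (Y \<omega>)) = 0"
proof -
  from ind have rvX: "random_variable S X" and rvY: "random_variable T Y"
    and eq: "distr M S X \<Otimes>\<^sub>M distr M T Y = distr M (S \<Otimes>\<^sub>M T) (\<lambda>x. (X x, Y x))"
    by (auto simp: indep_var_distribution_eq)
  interpret PX: prob_space "distr M S X" by (rule prob_space_distr[OF rvX])
  interpret PY: prob_space "distr M T Y" by (rule prob_space_distr[OF rvY])
  interpret PXY: pair_prob_space "distr M S X" "distr M T Y" by unfold_locales
  have XY: "(\<lambda>x. (X x, Y x)) \<in> measurable M (S \<Otimes>\<^sub>M T)" using rvX rvY by (rule measurable_Pair)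
  have "expectation (\<lambda>\<omega>. \<Phi> (X \<omega>) (Y \<omega>)) = (\<integral>z. (\<lambda>(x, y). \<Phi> x y) z \<partial>distr M (S \<Otimes>\<^sub>M T) (\<lambda>x. (X x, Y x)))"
    by (subst integral_distr[OF XY \<Phi>m]) simp
  also have "\<dots> = (\<integral>z. (\<lambda>(x, y). \<Phi> x y) z \<partial>(distr M S X \<Otimes>\<^sub>M distr M T Y))"
    by (simp add: eq)
  also have "\<dots> = (\<integral>y. (\<integral>x. \<Phi> x y \<partial>distr M S X) \<partial>distr M T Y)"
  proof (rule PXY.integral_snd[symmetric])
    have sp: "sets (distr M S X \<Otimes>\<^sub>M distr M T Y) = sets (S \<Otimes>\<^sub>M T)"
      by (intro sets_pair_measure_cong) auto
    have "prob_space (distr M S X \<Otimes>\<^sub>M distr M T Y)"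
      unfolding eq by (rule prob_space_distr[OF XY])
    then have fmm: "finite_measure (distr M S X \<Otimes>\<^sub>M distr M T Y)" by (rule prob_space.finite_measure)
    show "integrable (distr M S X \<Otimes>\<^sub>M distr M T Y) (\<lambda>(x, y). \<Phi> x y)"
      using \<Phi>m bd by (intro finite_measure.integrable_const_bound[OF fmm, of _ B])
        (auto simp: measurable_cong_sets[OF sp refl] intro!: always_eventually split: prod.splits)
  qed
  also have "\<dots> = (\<integral>y. 0 \<partial>distr M T Y)"
    by (intro Bochner_Integration.integral_cong refl inner) simp
  finally show ?thesis by simp
qed

lemma (in prob_space) lone_zero:
  fixes \<Phi> :: "'b \<Rightarrow> ('i \<Rightarrow> 'b) \<Rightarrow> real"
  assumes ind: "indep_vars (\<lambda>_. N) Z I" and sI: "s \<in> I" and BI: "B \<subseteq> I" and sB: "s \<notin> B"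
    and \<Phi>m: "(\<lambda>(x, y). \<Phi> x y) \<in> borel_measurable (N \<Otimes>\<^sub>M PiM B (\<lambda>_. N))"
    and bd: "\<And>x y. \<bar>\<Phi> x y\<bar> \<le> C"
    and inner: "\<And>y. y \<in> space (PiM B (\<lambda>_. N)) \<Longrightarrow> (\<integral>x. \<Phi> x y \<partial>distr M N (Z s)) = 0"
  shows "expectation (\<lambda>\<omega>. \<Phi> (Z s \<omega>) (restrict (\<lambda>i. Z i \<omega>) B)) = 0"
proof -
  have iv: "indep_var (PiM {s} (\<lambda>_. N)) (\<lambda>\<omega>. restrict (\<lambda>i. Z i \<omega>) {s})
                       (PiM B (\<lambda>_. N)) (\<lambda>\<omega>. restrict (\<lambda>i. Z i \<omega>) B)"
    using sI BI sB by (intro indep_var_restrict[OF ind]) auto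
  have Zs: "Z s \<in> measurable M N" using ind sI by (auto simp: indep_vars_def)
  have rvA: "(\<lambda>\<omega>. restrict (\<lambda>i. Z i \<omega>) {s}) \<in> measurable M (PiM {s} (\<lambda>_. N))"
    using Zs by (intro measurable_restrict) auto
  have m2: "(\<lambda>(x, y). \<Phi> (x s) y) \<in> borel_measurable (PiM {s} (\<lambda>_. N) \<Otimes>\<^sub>M PiM B (\<lambda>_. N))"
  proof -
    have "(\<lambda>(x, y). (x s, y)) \<in> measurable (PiM {s} (\<lambda>_. N) \<Otimes>\<^sub>M PiM B (\<lambda>_. N)) (N \<Otimes>\<^sub>M PiM B (\<lambda>_. N))"
      by measurable
    from measurable_comp[OF this \<Phi>m] show ?thesis by (simp add: comp_def case_prod_beta)
  qed
  have "expectation (\<lambda>\<omega>. (\<lambda>x y. \<Phi> (x s) y) (restrict (\<lambda>i. Z i \<omega>) {s}) (restrict (\<lambda>i. Z i \<omega>) B)) = 0"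
  proof (rule indep_zero[OF iv _ bd])
    show "(\<lambda>(x, y). \<Phi> (x s) y) \<in> borel_measurable (PiM {s} (\<lambda>_. N) \<Otimes>\<^sub>M PiM B (\<lambda>_. N))" by (rule m2)
    fix y assume y: "y \<in> space (PiM B (\<lambda>_. N))"
    have my: "(\<lambda>x. \<Phi> x y) \<in> borel_measurable N"
      using measurable_comp[OF measurable_Pair2'[OF y, of N] \<Phi>m] by (simp add: comp_def)
    have my2: "(\<lambda>x. \<Phi> (x s) y) \<in> borel_measurable (PiM {s} (\<lambda>_. N))"
      using measurable_comp[OF measurable_component_singleton[of s "{s}" "\<lambda>_. N"] my] by (simp add: comp_def)
    have "(\<integral>x. \<Phi> (x s) y \<partial>distr M (PiM {s} (\<lambda>_. N)) (\<lambda>\<omega>. restrict (\<lambda>i. Z i \<omega>) {s}))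
        = (\<integral>\<omega>. \<Phi> (Z s \<omega>) y \<partial>M)"
      by (subst integral_distr[OF rvA my2]) simp
    also have "\<dots> = (\<integral>x. \<Phi> x y \<partial>distr M N (Z s))"
      by (subst integral_distr[OF Zs my]) simp
    finally show "(\<integral>x. \<Phi> (x s) y \<partial>distr M (PiM {s} (\<lambda>_. N)) (\<lambda>\<omega>. restrict (\<lambda>i. Z i \<omega>) {s})) = 0"
      using inner[OF y] by simp
  qed
  then show ?thesis by simp
qed




lemma (in prob_space) abs_expect_le:
  fixes f :: "'a \<Rightarrow> real"
  assumes "f \<in> borel_measurable M" "\<And>x. \<bar>f x\<bar> \<le> C"
  shows "\<bar>expectation f\<bar> \<le> C"
proof -
  have "\<bar>expectation f\<bar> \<le> expectation (\<lambda>x. \<bar>f x\<bar>)" by (rule integral_abs_bound)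
  also have "\<dots> \<le> C"
    using assms by (intro integral_le_const integrable_const_bound[where B=C]) auto
  finally show ?thesis .
qed

lemma prod_bound:
  fixes a b :: real
  assumes "\<bar>a\<bar> \<le> 2" "\<bar>b\<bar> \<le> 2" shows "\<bar>a * b\<bar> \<le> 4"
proof -
  have "\<bar>a\<bar> * \<bar>b\<bar> \<le> 2 * 2" using assms by (intro mult_mono) auto
  then show ?thesis by (simp add: abs_mult)
qed

locale setupD = prob_space M + twoP P1 P2
  for M :: "'a measure" and P1 P2 :: "real measure" +
  fixes Z :: "'i \<Rightarrow> 'a \<Rightarrow> 'v::topological_space" and I SA SB :: "'i set"
    and \<alpha> \<beta> :: "'v \<Rightarrow> real"
  assumes ind: "indep_vars (\<lambda>_. borel) Z I"
    and finI: "finite I" and SAI: "SA \<subseteq> I" and SBI: "SB \<subseteq> I"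
    and \<alpha>m[measurable]: "\<alpha> \<in> borel_measurable borel" and \<beta>m[measurable]: "\<beta> \<in> borel_measurable borel"
    and lawA: "\<And>s. s \<in> SA \<Longrightarrow> distr M borel (\<lambda>\<omega>. \<alpha> (Z s \<omega>)) = P1"
    and lawB: "\<And>t. t \<in> SB \<Longrightarrow> distr M borel (\<lambda>\<omega>. \<beta> (Z t \<omega>)) = P2"
begin

lemma Zm[measurable]: "i \<in> I \<Longrightarrow> Z i \<in> borel_measurable M"
  using ind by (auto simp: indep_vars_def)

definition H :: "'i \<times> 'i \<Rightarrow> 'a \<Rightarrow> real" where
  "H p \<omega> = hh P1 P2 (\<alpha> (Z (fst p) \<omega>)) (\<beta> (Z (snd p) \<omega>))"

lemma H_bound: "\<bar>H p \<omega>\<bar> \<le> 2" unfolding H_def by (rule hh_bound)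

lemma H_meas: "fst p \<in> I \<Longrightarrow> snd p \<in> I \<Longrightarrow> H p \<in> borel_measurable M"
  unfolding H_def by (intro hh_meas2) auto

lemma inner_a:
  assumes "s \<in> SA"
  shows "(\<integral>x. hh P1 P2 (\<alpha> x) b * c \<partial>distr M borel (Z s)) = 0"
proof -
  have sI: "s \<in> I" using assms SAI by auto
  have "(\<integral>x. hh P1 P2 (\<alpha> x) b * c \<partial>distr M borel (Z s)) = (\<integral>\<omega>. hh P1 P2 (\<alpha> (Z s \<omega>)) b * c \<partial>M)"
    using sI by (subst integral_distr) (auto intro!: hh_meas2 measurable_compose[OF Zm \<alpha>m] measurable_compose[OF Zm \<beta>m])
  also have "\<dots> = (\<integral>a. hh P1 P2 a b * c \<partial>distr M borel (\<lambda>\<omega>. \<alpha> (Z s \<omega>)))"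
    using sI by (subst integral_distr) (auto intro!: hh_meas2 measurable_compose[OF Zm \<alpha>m] measurable_compose[OF Zm \<beta>m])
  also have "\<dots> = (\<integral>a. hh P1 P2 a b \<partial>P1) * c"
    using lawA[OF assms] by simp
  finally show ?thesis by (simp add: hh_int_a)
qed

lemma inner_b:
  assumes "t \<in> SB"
  shows "(\<integral>x. hh P1 P2 a (\<beta> x) * c \<partial>distr M borel (Z t)) = 0"
proof -
  have sI: "t \<in> I" using assms SBI by auto
  have "(\<integral>x. hh P1 P2 a (\<beta> x) * c \<partial>distr M borel (Z t)) = (\<integral>\<omega>. hh P1 P2 a (\<beta> (Z t \<omega>)) * c \<partial>M)"
    using sI by (subst integral_distr) (auto intro!: hh_meas2 measurable_compose[OF Zm \<alpha>m] measurable_compose[OF Zm \<beta>m])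
  also have "\<dots> = (\<integral>b. hh P1 P2 a b * c \<partial>distr M borel (\<lambda>\<omega>. \<beta> (Z t \<omega>)))"
    using sI by (subst integral_distr) (auto intro!: hh_meas2 measurable_compose[OF Zm \<alpha>m] measurable_compose[OF Zm \<beta>m])
  also have "\<dots> = (\<integral>b. hh P1 P2 a b \<partial>P2) * c"
    using lawB[OF assms] by simp
  finally show ?thesis by (simp add: hh_int_b)
qed

lemma zero_a:
  assumes s: "s \<in> SA" and t: "t \<in> SB" and s': "s' \<in> SA" and t': "t' \<in> SB"
    and lone: "s \<noteq> t" "s \<noteq> s'" "s \<noteq> t'"
  shows "expectation (\<lambda>\<omega>. H (s, t) \<omega> * H (s', t') \<omega>) = 0"
proof -
  define B where "B = {t, s', t'}"
  define \<Phi> where "\<Phi> = (\<lambda>x y. hh P1 P2 (\<alpha> x) (\<beta> (y t)) * hh P1 P2 (\<alpha> (y s')) (\<beta> (y t')))"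
  have BI: "B \<subseteq> I" using t s' t' SAI SBI by (auto simp: B_def)
  have sB: "s \<notin> B" using lone by (auto simp: B_def)
  have inB: "t \<in> B" "s' \<in> B" "t' \<in> B" by (auto simp: B_def)
  have "expectation (\<lambda>\<omega>. \<Phi> (Z s \<omega>) (restrict (\<lambda>i. Z i \<omega>) B)) = 0"
  proof (rule lone_zero[OF ind _ BI sB])
    show "s \<in> I" using s SAI by auto
    show "(\<lambda>(x, y). \<Phi> x y) \<in> borel_measurable (borel \<Otimes>\<^sub>M PiM B (\<lambda>_. borel))"
      unfolding \<Phi>_def case_prod_beta
    proof (intro borel_measurable_times hh_meas2)
      have c: "(\<lambda>z. snd z i) \<in> borel_measurable (borel \<Otimes>\<^sub>M PiM B (\<lambda>_. borel))" if "i \<in> B" for i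
        using that by measurable
      show "(\<lambda>z. \<alpha> (fst z)) \<in> borel_measurable (borel \<Otimes>\<^sub>M PiM B (\<lambda>_. borel))" by measurable
      show "(\<lambda>z. \<beta> (snd z t)) \<in> borel_measurable (borel \<Otimes>\<^sub>M PiM B (\<lambda>_. borel))"
        by (rule measurable_compose[OF c[OF inB(1)] \<beta>m])
      show "(\<lambda>z. \<alpha> (snd z s')) \<in> borel_measurable (borel \<Otimes>\<^sub>M PiM B (\<lambda>_. borel))"
        by (rule measurable_compose[OF c[OF inB(2)] \<alpha>m])
      show "(\<lambda>z. \<beta> (snd z t')) \<in> borel_measurable (borel \<Otimes>\<^sub>M PiM B (\<lambda>_. borel))"
        by (rule measurable_compose[OF c[OF inB(3)] \<beta>m])
    qed
    show "\<bar>\<Phi> x y\<bar> \<le> 4" for x y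
      unfolding \<Phi>_def by (rule prod_bound[OF hh_bound hh_bound])
    fix y show "(\<integral>x. \<Phi> x y \<partial>distr M borel (Z s)) = 0"
      unfolding \<Phi>_def by (rule inner_a[OF s])
  qed
  moreover have "\<And>\<omega>. \<Phi> (Z s \<omega>) (restrict (\<lambda>i. Z i \<omega>) B) = H (s, t) \<omega> * H (s', t') \<omega>"
    using inB by (simp add: \<Phi>_def H_def)
  ultimately show ?thesis by simp
qed

lemma zero_b:
  assumes s: "s \<in> SA" and t: "t \<in> SB" and s': "s' \<in> SA" and t': "t' \<in> SB"
    and lone: "t \<noteq> s" "t \<noteq> s'" "t \<noteq> t'"
  shows "expectation (\<lambda>\<omega>. H (s, t) \<omega> * H (s', t') \<omega>) = 0"
proof -
  define B where "B = {s, s', t'}"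
  define \<Phi> where "\<Phi> = (\<lambda>x y. hh P1 P2 (\<alpha> (y s)) (\<beta> x) * hh P1 P2 (\<alpha> (y s')) (\<beta> (y t')))"
  have BI: "B \<subseteq> I" using s s' t' SAI SBI by (auto simp: B_def)
  have sB: "t \<notin> B" using lone by (auto simp: B_def)
  have inB: "s \<in> B" "s' \<in> B" "t' \<in> B" by (auto simp: B_def)
  have "expectation (\<lambda>\<omega>. \<Phi> (Z t \<omega>) (restrict (\<lambda>i. Z i \<omega>) B)) = 0"
  proof (rule lone_zero[OF ind _ BI sB])
    show "t \<in> I" using t SBI by auto
    show "(\<lambda>(x, y). \<Phi> x y) \<in> borel_measurable (borel \<Otimes>\<^sub>M PiM B (\<lambda>_. borel))"
      unfolding \<Phi>_def case_prod_beta
    proof (intro borel_measurable_times hh_meas2)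
      have c: "(\<lambda>z. snd z i) \<in> borel_measurable (borel \<Otimes>\<^sub>M PiM B (\<lambda>_. borel))" if "i \<in> B" for i
        using that by measurable
      show "(\<lambda>z. \<beta> (fst z)) \<in> borel_measurable (borel \<Otimes>\<^sub>M PiM B (\<lambda>_. borel))" by measurable
      show "(\<lambda>z. \<alpha> (snd z s)) \<in> borel_measurable (borel \<Otimes>\<^sub>M PiM B (\<lambda>_. borel))"
        by (rule measurable_compose[OF c[OF inB(1)] \<alpha>m])
      show "(\<lambda>z. \<alpha> (snd z s')) \<in> borel_measurable (borel \<Otimes>\<^sub>M PiM B (\<lambda>_. borel))"
        by (rule measurable_compose[OF c[OF inB(2)] \<alpha>m])
      show "(\<lambda>z. \<beta> (snd z t')) \<in> borel_measurable (borel \<Otimes>\<^sub>M PiM B (\<lambda>_. borel))"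
        by (rule measurable_compose[OF c[OF inB(3)] \<beta>m])
    qed
    show "\<bar>\<Phi> x y\<bar> \<le> 4" for x y
      unfolding \<Phi>_def by (rule prod_bound[OF hh_bound hh_bound])
    fix y show "(\<integral>x. \<Phi> x y \<partial>distr M borel (Z t)) = 0"
      unfolding \<Phi>_def by (rule inner_b[OF t])
  qed
  moreover have "\<And>\<omega>. \<Phi> (Z t \<omega>) (restrict (\<lambda>i. Z i \<omega>) B) = H (s, t) \<omega> * H (s', t') \<omega>"
    using inB by (simp add: \<Phi>_def H_def)
  ultimately show ?thesis by simp
qed


lemma finSA: "finite SA" and finSB: "finite SB"
  using finI SAI SBI finite_subset by auto

definition K where "K = Sigma SA (\<lambda>s. SB - {s})"

lemma finK: "finite K" unfolding K_def using finSA finSB by auto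

lemma HH_meas: "p \<in> K \<Longrightarrow> q \<in> K \<Longrightarrow> (\<lambda>\<omega>. H p \<omega> * H q \<omega>) \<in> borel_measurable M"
  unfolding K_def using SAI SBI by (intro borel_measurable_times H_meas) auto

lemma HH_int: "p \<in> K \<Longrightarrow> q \<in> K \<Longrightarrow> integrable M (\<lambda>\<omega>. H p \<omega> * H q \<omega>)"
  by (intro integrable_const_bound[where B=4] HH_meas always_eventually allI)
     (simp add: prod_bound[OF H_bound H_bound] del: abs_mult)


end


context setupD begin
lemma term_bound:
  assumes p: "p \<in> K" and q: "q \<in> K"
  shows "expectation (\<lambda>\<omega>. H p \<omega> * H q \<omega>) \<le> 4 * (of_bool (q = p) + of_bool (q = (snd p, fst p)))"
proof (cases "q = p \<or> q = (snd p, fst p)")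
  case True
  have a: "\<bar>expectation (\<lambda>\<omega>. H p \<omega> * H q \<omega>)\<bar> \<le> 4"
    by (intro abs_expect_le HH_meas p q prod_bound[OF H_bound H_bound])
  have "4 \<le> 4 * (of_bool (q = p) + of_bool (q = (snd p, fst p)) :: real)"
    using True by (cases "q = p") auto
  then show ?thesis using a by linarith
next
  case False
  obtain s t where pst: "p = (s, t)" by (cases p)
  obtain s' t' where qst: "q = (s', t')" by (cases q)
  have st: "s \<in> SA" "t \<in> SB" "s \<noteq> t" using p unfolding pst K_def by auto
  have st': "s' \<in> SA" "t' \<in> SB" "s' \<noteq> t'" using q unfolding qst K_def by auto
  have ne: "\<not> (s' = s \<and> t' = t)" "\<not> (s' = t \<and> t' = s)" using False unfolding pst qst by auto
  have "expectation (\<lambda>\<omega>. H (s, t) \<omega> * H (s', t') \<omega>) = 0"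
  proof (cases "s = s' \<or> s = t'")
    case False
    then have "s \<noteq> s'" "s \<noteq> t'" by auto
    then show ?thesis using zero_a[OF st(1,2) st'(1,2) st(3)] by blast
  next
    case True
    have "t \<noteq> s'" "t \<noteq> t'" using True ne st st' by blast+
    then show ?thesis using zero_b[OF st(1,2) st'(1,2)] st(3) by blast
  qed
  then have "expectation (\<lambda>\<omega>. H p \<omega> * H q \<omega>) = 0" unfolding pst qst .
  then show ?thesis by simp
qed
lemma off_bound:
  "expectation (\<lambda>\<omega>. (\<Sum>p\<in>K. H p \<omega>)\<^sup>2) \<le> 8 * real (card SA) * real (card SB)"
proof -
  have "expectation (\<lambda>\<omega>. (\<Sum>p\<in>K. H p \<omega>)\<^sup>2) = expectation (\<lambda>\<omega>. \<Sum>p\<in>K. \<Sum>q\<in>K. H p \<omega> * H q \<omega>)"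
    by (simp add: power2_eq_square sum_product)
  also have "\<dots> = (\<Sum>p\<in>K. \<Sum>q\<in>K. expectation (\<lambda>\<omega>. H p \<omega> * H q \<omega>))"
    by (simp add: Bochner_Integration.integral_sum HH_int integrable_sum)
  also have "\<dots> \<le> (\<Sum>p\<in>K. \<Sum>q\<in>K. 4 * (of_bool (q = p) + of_bool (q = (snd p, fst p))))"
    by (intro sum_mono term_bound)
  also have "\<dots> = (\<Sum>p\<in>K. 4 * (of_bool (p \<in> K) + of_bool ((snd p, fst p) \<in> K)))"
    by (simp add: sum_distrib_left[symmetric] sum.distrib of_bool_def finK sum.delta' del: of_bool_eq)
  also have "\<dots> \<le> (\<Sum>p\<in>K. 8)"
    by (intro sum_mono) auto
  also have "\<dots> = 8 * real (card K)" by simp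
  also have "card K \<le> card (SA \<times> SB)"
    by (intro card_mono) (auto simp: K_def finSA finSB)
  then have "8 * real (card K) \<le> 8 * real (card SA) * real (card SB)"
    by (simp add: card_cartesian_product flip: of_nat_mult)
  finally show ?thesis .
qed

lemma card_int_sq: "real (card (SA \<inter> SB)) ^ 2 \<le> real (card SA) * real (card SB)"
proof -
  have "card (SA \<inter> SB) \<le> card SA" "card (SA \<inter> SB) \<le> card SB"
    using finSA finSB by (auto intro: card_mono)
  then have "real (card (SA \<inter> SB)) * real (card (SA \<inter> SB)) \<le> real (card SA) * real (card SB)"
    by (intro mult_mono) auto
  then show ?thesis by (simp add: power2_eq_square)
qed

lemma hZ_meas: "s \<in> I \<Longrightarrow> t \<in> I \<Longrightarrow> (\<lambda>\<omega>. hh P1 P2 (\<alpha> (Z s \<omega>)) (\<beta> (Z t \<omega>))) \<in> borel_measurable M"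
  by (intro hh_meas2 measurable_compose[OF Zm \<alpha>m] measurable_compose[OF Zm \<beta>m])

lemma full_bound:
  "expectation (\<lambda>\<omega>. (\<Sum>s\<in>SA. \<Sum>t\<in>SB. hh P1 P2 (\<alpha> (Z s \<omega>)) (\<beta> (Z t \<omega>)))\<^sup>2)
     \<le> 24 * real (card SA) * real (card SB)"
proof -
  define f where "f = (\<lambda>s t \<omega>. hh P1 P2 (\<alpha> (Z s \<omega>)) (\<beta> (Z t \<omega>)))"
  define dg where "dg = (\<lambda>\<omega>. \<Sum>s\<in>SA \<inter> SB. f s s \<omega>)"
  define off where "off = (\<lambda>\<omega>. \<Sum>p\<in>K. H p \<omega>)"
  have split: "(\<Sum>s\<in>SA. \<Sum>t\<in>SB. f s t \<omega>) = dg \<omega> + off \<omega>" for \<omega>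
  proof -
    have "(\<Sum>t\<in>SB. f s t \<omega>) = (if s \<in> SB then f s s \<omega> else 0) + (\<Sum>t\<in>SB - {s}. f s t \<omega>)" for s
      using finSB by (cases "s \<in> SB") (auto simp: sum.remove)
    then have "(\<Sum>s\<in>SA. \<Sum>t\<in>SB. f s t \<omega>) = (\<Sum>s\<in>SA. if s \<in> SB then f s s \<omega> else 0) + (\<Sum>s\<in>SA. \<Sum>t\<in>SB - {s}. f s t \<omega>)"
      by (simp add: sum.distrib)
    also have "(\<Sum>s\<in>SA. if s \<in> SB then f s s \<omega> else 0) = dg \<omega>"
      unfolding dg_def using finSA by (simp add: sum.inter_restrict)
    also have "(\<Sum>s\<in>SA. \<Sum>t\<in>SB - {s}. f s t \<omega>) = off \<omega>"
      unfolding off_def K_def using finSA finSB by (subst sum.Sigma) (auto simp: H_def f_def case_prod_beta)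
    finally show ?thesis .
  qed
  have dgb: "\<bar>dg \<omega>\<bar> \<le> 2 * real (card (SA \<inter> SB))" for \<omega>
  proof -
    have "\<bar>dg \<omega>\<bar> \<le> (\<Sum>s\<in>SA \<inter> SB. \<bar>f s s \<omega>\<bar>)" unfolding dg_def by (rule sum_abs)
    also have "\<dots> \<le> (\<Sum>s\<in>SA \<inter> SB. 2)" by (intro sum_mono) (simp add: f_def hh_bound)
    finally show ?thesis by simp
  qed
  have dg2: "dg \<omega> ^ 2 \<le> 4 * real (card SA) * real (card SB)" for \<omega>
  proof -
    have "dg \<omega> ^ 2 = \<bar>dg \<omega>\<bar> ^ 2" by simp
    also have "\<dots> \<le> (2 * real (card (SA \<inter> SB))) ^ 2"
      by (intro power_mono dgb) auto
    also have "\<dots> \<le> 4 * real (card SA) * real (card SB)"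
      using card_int_sq by (simp add: power_mult_distrib)
    finally show ?thesis .
  qed
  have dgm: "dg \<in> borel_measurable M"
    unfolding dg_def f_def using SAI SBI by (intro borel_measurable_sum hZ_meas) auto
  have offm: "off \<in> borel_measurable M"
    unfolding off_def K_def using SAI SBI by (intro borel_measurable_sum H_meas) auto
  have offb: "\<bar>off \<omega>\<bar> \<le> 2 * real (card K)" for \<omega>
  proof -
    have "\<bar>off \<omega>\<bar> \<le> (\<Sum>p\<in>K. \<bar>H p \<omega>\<bar>)" unfolding off_def by (rule sum_abs)
    also have "\<dots> \<le> (\<Sum>p\<in>K. 2)" by (intro sum_mono) (simp add: H_bound)
    finally show ?thesis by simp
  qed
  have int_dg: "integrable M (\<lambda>\<omega>. dg \<omega> ^ 2)"
    using dgm dg2 by (intro integrable_const_bound[where B="4 * real (card SA) * real (card SB)"]) auto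
  have int_off: "integrable M (\<lambda>\<omega>. off \<omega> ^ 2)"
  proof (intro integrable_const_bound[where B="(2 * real (card K))^2"] always_eventually allI)
    fix \<omega> have "\<bar>off \<omega>\<bar> ^ 2 \<le> (2 * real (card K))^2" by (intro power_mono offb) auto
    then show "norm (off \<omega> ^ 2) \<le> (2 * real (card K))^2" by simp
  qed (use offm in auto)
  have "expectation (\<lambda>\<omega>. (\<Sum>s\<in>SA. \<Sum>t\<in>SB. hh P1 P2 (\<alpha> (Z s \<omega>)) (\<beta> (Z t \<omega>)))\<^sup>2)
      = expectation (\<lambda>\<omega>. (dg \<omega> + off \<omega>)\<^sup>2)"
    using split unfolding f_def by simp
  also have "\<dots> \<le> expectation (\<lambda>\<omega>. 2 * dg \<omega> ^ 2 + 2 * off \<omega> ^ 2)"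
  proof (rule integral_mono)
    show "integrable M (\<lambda>\<omega>. 2 * dg \<omega> ^ 2 + 2 * off \<omega> ^ 2)" using int_dg int_off by auto
    have "(\<lambda>\<omega>. (dg \<omega> + off \<omega>)\<^sup>2) = (\<lambda>\<omega>. dg \<omega> ^ 2 + off \<omega> ^ 2 + 2 * (dg \<omega> * off \<omega>))"
      by (simp add: power2_sum mult.assoc)
    moreover have "integrable M (\<lambda>\<omega>. dg \<omega> * off \<omega>)"
    proof (intro integrable_const_bound[where B="2 * real (card (SA \<inter> SB)) * (2 * real (card K))"] always_eventually allI)
      fix \<omega>
      have "\<bar>dg \<omega>\<bar> * \<bar>off \<omega>\<bar> \<le> 2 * real (card (SA \<inter> SB)) * (2 * real (card K))"
        by (intro mult_mono dgb offb) auto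
      then show "norm (dg \<omega> * off \<omega>) \<le> 2 * real (card (SA \<inter> SB)) * (2 * real (card K))"
        by (simp only: real_norm_def abs_mult)
    qed (use dgm offm in auto)
    ultimately show "integrable M (\<lambda>\<omega>. (dg \<omega> + off \<omega>)\<^sup>2)" using int_dg int_off by auto
    fix \<omega> show "(dg \<omega> + off \<omega>)\<^sup>2 \<le> 2 * dg \<omega> ^ 2 + 2 * off \<omega> ^ 2"
      using sum_squares_ge_zero[of "dg \<omega> - off \<omega>" 0] by (simp add: power2_eq_square algebra_simps)
  qed
  also have "\<dots> = 2 * expectation (\<lambda>\<omega>. dg \<omega> ^ 2) + 2 * expectation (\<lambda>\<omega>. off \<omega> ^ 2)"
    using int_dg int_off by simp
  also have "expectation (\<lambda>\<omega>. dg \<omega> ^ 2) \<le> 4 * real (card SA) * real (card SB)"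
    using int_dg dg2 by (intro integral_le_const) auto
  also have "expectation (\<lambda>\<omega>. off \<omega> ^ 2) \<le> 8 * real (card SA) * real (card SB)"
    using off_bound unfolding off_def .
  finally show ?thesis by simp
qed
end



lemma meas_from_distr:
  fixes f :: "'a \<Rightarrow> 'b::topological_space"
  assumes P: "prob_space (distr N borel f)"
  shows "f \<in> measurable N borel"
proof (rule measurableI)
  fix x show "f x \<in> space borel" by simp
next
  fix A :: "'b set" assume A: "A \<in> sets borel"
  define \<mu> where "\<mu> = (\<lambda>A. emeasure N (f -` A \<inter> space N))"
  have ss: "sigma_sets (space borel) (sets (borel :: 'b measure)) = sets borel"
    by (rule sets.sigma_sets_eq)
  have em: "emeasure (distr N borel f) = (\<lambda>B. if B \<in> sets borel \<and> measure_space (space borel) (sets borel) \<mu> then \<mu> B else 0)"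
    unfolding distr_def \<mu>_def emeasure_measure_of_conv ss by simp
  have sp: "space (distr N borel f) = UNIV" by simp
  have one: "emeasure (distr N borel f) UNIV = 1"
    using prob_space.emeasure_space_1[OF P] sp by simp
  have ms: "measure_space (space borel) (sets borel) \<mu>"
    using one em by (auto split: if_splits)
  have muU: "\<mu> UNIV = 1" using one em ms by simp
  have add: "additive (sets borel) \<mu>"
    using ms unfolding measure_space_def
    by (intro ring_of_sets.countably_additive_additive) (auto intro: sigma_algebra.axioms algebra.axioms)
  show "f -` A \<inter> space N \<in> sets N"
  proof (rule ccontr)
    assume nA: "f -` A \<inter> space N \<notin> sets N"
    have c: "f -` (- A) \<inter> space N = space N - (f -` A \<inter> space N)" by auto
    have nB: "f -` (- A) \<inter> space N \<notin> sets N"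
    proof
      assume "f -` (- A) \<inter> space N \<in> sets N"
      then have "space N - (f -` (- A) \<inter> space N) \<in> sets N" by auto
      moreover have "space N - (f -` (- A) \<inter> space N) = f -` A \<inter> space N" by auto
      ultimately show False using nA by simp
    qed
    have "\<mu> (A \<union> - A) = \<mu> A + \<mu> (- A)"
      using add A by (intro additiveD) (auto simp: sets.compl_sets)
    then have "\<mu> UNIV = 0" using nA nB by (simp add: \<mu>_def emeasure_notin_sets)
    then show False using muU by simp
  qed
qed

lemma sum_SA:
  fixes g :: "nat + nat + nat \<Rightarrow> real"
  shows "(\<Sum>s\<in>Inl ` {..<a} \<union> Inr ` Inl ` {..<b}. g s) = (\<Sum>k<a. g (Inl k)) + (\<Sum>k<b. g (Inr (Inl k)))"
  by (subst sum.union_disjoint) (auto simp: sum.reindex inj_on_def)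

lemma sum_SB:
  fixes g :: "nat + nat + nat \<Rightarrow> real"
  shows "(\<Sum>s\<in>Inl ` {..<a} \<union> Inr ` Inr ` {..<b}. g s) = (\<Sum>k<a. g (Inl k)) + (\<Sum>k<b. g (Inr (Inr k)))"
  by (subst sum.union_disjoint) (auto simp: sum.reindex inj_on_def)

lemma card_SA: "card (Inl ` {..<a} \<union> Inr ` Inl ` {..<b} :: (nat + nat + nat) set) = a + b"
  by (subst card_Un_disjoint) (auto simp: card_image inj_on_def)

lemma card_SB: "card (Inl ` {..<a} \<union> Inr ` Inr ` {..<b} :: (nat + nat + nat) set) = a + b"
  by (subst card_Un_disjoint) (auto simp: card_image inj_on_def)

lemma alg:
  fixes a b :: "'i \<Rightarrow> real" and F1 F2 :: "real \<Rightarrow> real" and p :: real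
  assumes fA: "finite SA" and fB: "finite SB" and m1: "real (card SA) = m1" "m1 > 0"
    and m2: "real (card SB) = m2" "m2 > 0"
  shows "(\<Sum>t\<in>SB. (\<Sum>s\<in>SA. cfun (b t - a s)) / m1) / m2 - p
          - ((\<Sum>t\<in>SB. F1 (b t)) / m2 - (\<Sum>s\<in>SA. F2 (a s)) / m1 + 1 - 2 * p)
         = (\<Sum>s\<in>SA. \<Sum>t\<in>SB. cfun (b t - a s) - F1 (b t) - (1 - F2 (a s)) + p) / (m1 * m2)"
proof -
  have "(\<Sum>s\<in>SA. \<Sum>t\<in>SB. cfun (b t - a s) - F1 (b t) - (1 - F2 (a s)) + p)
      = (\<Sum>s\<in>SA. \<Sum>t\<in>SB. cfun (b t - a s)) - m1 * (\<Sum>t\<in>SB. F1 (b t)) - m2 * (\<Sum>s\<in>SA. (1 - F2 (a s))) + m1 * m2 * p"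
    using m1 m2 by (simp add: sum.distrib sum_subtractf sum.swap[of _ SA SB] sum_distrib_left[symmetric] algebra_simps)
  also have "(\<Sum>s\<in>SA. (1 - F2 (a s))) = m1 - (\<Sum>s\<in>SA. F2 (a s))"
    using m1 by (simp add: sum_subtractf)
  finally have e: "(\<Sum>s\<in>SA. \<Sum>t\<in>SB. cfun (b t - a s) - F1 (b t) - (1 - F2 (a s)) + p)
      = (\<Sum>s\<in>SA. \<Sum>t\<in>SB. cfun (b t - a s)) - m1 * (\<Sum>t\<in>SB. F1 (b t)) - m2 * (m1 - (\<Sum>s\<in>SA. F2 (a s))) + m1 * m2 * p" .
  have sw: "(\<Sum>t\<in>SB. (\<Sum>s\<in>SA. cfun (b t - a s)) / m1) = (\<Sum>s\<in>SA. \<Sum>t\<in>SB. cfun (b t - a s)) / m1"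
    by (simp add: sum_divide_distrib[symmetric] sum.swap[of _ SB SA])
  show ?thesis unfolding e sw using m1 m2 by (simp add: field_simps)
qed

lemma vec_nth_meas[measurable]: "(\<lambda>x::real^'d. x $ l) \<in> borel_measurable borel"
  by (intro borel_measurable_continuous_onI continuous_intros)

lemma fst_nth_meas[measurable]: "(\<lambda>z::(real^'d) \<times> (real^'d). fst z $ l) \<in> borel_measurable borel"
  by (intro borel_measurable_continuous_onI continuous_intros)
lemma snd_nth_meas[measurable]: "(\<lambda>z::(real^'d) \<times> (real^'d). snd z $ l) \<in> borel_measurable borel"
  by (intro borel_measurable_continuous_onI continuous_intros)

lemma norm_sq_vec: "(norm (x::real^'d))\<^sup>2 = (\<Sum>l\<in>UNIV. (x $ l)\<^sup>2)"
  unfolding power2_norm_eq_inner inner_vec_def by (simp add: power2_eq_square)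




lemma setup_inst:
  fixes M :: "'a measure"
    and Pc :: "((real^'d) \<times> (real^'d)) measure"
    and nc n1 n2 :: nat
    and Xc :: "nat \<Rightarrow> 'a \<Rightarrow> (real^'d) \<times> (real^'d)"
    and X1 X2 :: "nat \<Rightarrow> 'a \<Rightarrow> real^'d"
  assumes PM: "prob_space M"
    and meas_c: "\<And>j. j < nc \<Longrightarrow> Xc j \<in> borel_measurable M"
    and meas_1: "\<And>k. k < n1 \<Longrightarrow> X1 k \<in> borel_measurable M"
    and meas_2: "\<And>k. k < n2 \<Longrightarrow> X2 k \<in> borel_measurable M"
    and indep: "prob_space.indep_vars M (\<lambda>_. borel)
        (\<lambda>s \<omega>. case s of Inl j \<Rightarrow> Xc j \<omega>
                       | Inr (Inl k) \<Rightarrow> (X1 k \<omega>, X1 k \<omega>)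
                       | Inr (Inr k) \<Rightarrow> (X2 k \<omega>, X2 k \<omega>))
        (Inl ` {..<nc} \<union> Inr ` (Inl ` {..<n1} \<union> Inr ` {..<n2}))"
    and law_c: "\<And>j. j < nc \<Longrightarrow> distr M borel (Xc j) = Pc"
    and law_1: "\<And>k. k < n1 \<Longrightarrow> distr M borel (X1 k) = distr Pc borel fst"
    and law_2: "\<And>k. k < n2 \<Longrightarrow> distr M borel (X2 k) = distr Pc borel snd"
    and m1: "nc + n1 \<ge> 1" and m2: "nc + n2 \<ge> 1"
  shows "setupD M (marg1 Pc l) (marg2 Pc l)
     (\<lambda>s \<omega>. case s of Inl j \<Rightarrow> Xc j \<omega>
                       | Inr (Inl k) \<Rightarrow> (X1 k \<omega>, X1 k \<omega>)
                       | Inr (Inr k) \<Rightarrow> (X2 k \<omega>, X2 k \<omega>))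
     (Inl ` {..<nc} \<union> Inr ` (Inl ` {..<n1} \<union> Inr ` {..<n2}))
     (Inl ` {..<nc} \<union> Inr ` Inl ` {..<n1}) (Inl ` {..<nc} \<union> Inr ` Inr ` {..<n2})
     (\<lambda>z. fst z $ l) (\<lambda>z. snd z $ l)"
proof -
  interpret prob_space M by (rule PM)
  define Z where "Z = (\<lambda>s \<omega>. case s of Inl j \<Rightarrow> Xc j \<omega>
                       | Inr (Inl k) \<Rightarrow> (X1 k \<omega>, X1 k \<omega>)
                       | Inr (Inr k) \<Rightarrow> (X2 k \<omega>, X2 k \<omega>))"
  have lawA: "distr M borel (\<lambda>\<omega>. fst (Z s \<omega>) $ l) = marg1 Pc l"
    if s: "s \<in> Inl ` {..<nc} \<union> Inr ` Inl ` {..<n1}" for s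
  proof -
    from s consider (c) j where "s = Inl j" "j < nc" | (i) k where "s = Inr (Inl k)" "k < n1" by auto
    then show ?thesis
    proof cases
      case c
      have "marg1 Pc l = distr (distr M borel (Xc j)) borel (\<lambda>z. fst z $ l)"
        unfolding marg1_def law_c[OF c(2)] ..
      also have "\<dots> = distr M borel ((\<lambda>z. fst z $ l) \<circ> Xc j)"
        by (rule distr_distr[OF fst_nth_meas meas_c[OF c(2)]])
      finally show ?thesis by (simp add: Z_def c comp_def)
    next
      case i
      have "prob_space (distr Pc borel fst)"
        unfolding law_1[OF i(2), symmetric] by (rule prob_space_distr[OF meas_1[OF i(2)]])
      then have fm: "fst \<in> measurable Pc borel" by (rule meas_from_distr)
      have "marg1 Pc l = distr Pc borel ((\<lambda>x. x $ l) \<circ> fst)"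
        unfolding marg1_def by (simp add: comp_def)
      also have "\<dots> = distr (distr Pc borel fst) borel (\<lambda>x. x $ l)"
        by (rule distr_distr[symmetric, OF vec_nth_meas fm])
      also have "\<dots> = distr M borel ((\<lambda>x. x $ l) \<circ> X1 k)"
        unfolding law_1[OF i(2), symmetric] by (rule distr_distr[OF vec_nth_meas meas_1[OF i(2)]])
      finally show ?thesis by (simp add: Z_def i comp_def)
    qed
  qed
  have lawB: "distr M borel (\<lambda>\<omega>. snd (Z s \<omega>) $ l) = marg2 Pc l"
    if s: "s \<in> Inl ` {..<nc} \<union> Inr ` Inr ` {..<n2}" for s
  proof -
    from s consider (c) j where "s = Inl j" "j < nc" | (i) k where "s = Inr (Inr k)" "k < n2" by auto
    then show ?thesis
    proof cases
      case c
      have "marg2 Pc l = distr (distr M borel (Xc j)) borel (\<lambda>z. snd z $ l)"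
        unfolding marg2_def law_c[OF c(2)] ..
      also have "\<dots> = distr M borel ((\<lambda>z. snd z $ l) \<circ> Xc j)"
        by (rule distr_distr[OF snd_nth_meas meas_c[OF c(2)]])
      finally show ?thesis by (simp add: Z_def c comp_def)
    next
      case i
      have "prob_space (distr Pc borel snd)"
        unfolding law_2[OF i(2), symmetric] by (rule prob_space_distr[OF meas_2[OF i(2)]])
      then have fm: "snd \<in> measurable Pc borel" by (rule meas_from_distr)
      have "marg2 Pc l = distr Pc borel ((\<lambda>x. x $ l) \<circ> snd)"
        unfolding marg2_def by (simp add: comp_def)
      also have "\<dots> = distr (distr Pc borel snd) borel (\<lambda>x. x $ l)"
        by (rule distr_distr[symmetric, OF vec_nth_meas fm])
      also have "\<dots> = distr M borel ((\<lambda>x. x $ l) \<circ> X2 k)"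
        unfolding law_2[OF i(2), symmetric] by (rule distr_distr[OF vec_nth_meas meas_2[OF i(2)]])
      finally show ?thesis by (simp add: Z_def i comp_def)
    qed
  qed
  have Zm: "Z s \<in> borel_measurable M" if "s \<in> Inl ` {..<nc} \<union> Inr ` (Inl ` {..<n1} \<union> Inr ` {..<n2})" for s
    using that indep unfolding Z_def[symmetric] by (auto simp: indep_vars_def)
  obtain sa :: "nat + nat + nat" where sa: "sa \<in> Inl ` {..<nc} \<union> Inr ` Inl ` {..<n1}"
  proof (cases "nc = 0")
    case True then show ?thesis using m1 that[of "Inr (Inl 0)"] by auto
  next
    case False then show ?thesis using that[of "Inl 0"] by auto
  qed
  obtain sb :: "nat + nat + nat" where sb: "sb \<in> Inl ` {..<nc} \<union> Inr ` Inr ` {..<n2}"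
  proof (cases "nc = 0")
    case True then show ?thesis using m2 that[of "Inr (Inr 0)"] by auto
  next
    case False then show ?thesis using that[of "Inl 0"] by auto
  qed
  have p1: "prob_space (marg1 Pc l)"
    unfolding lawA[OF sa, symmetric] using sa
    by (intro prob_space_distr measurable_compose[OF Zm fst_nth_meas]) auto
  have p2: "prob_space (marg2 Pc l)"
    unfolding lawB[OF sb, symmetric] using sb
    by (intro prob_space_distr measurable_compose[OF Zm snd_nth_meas]) auto
  have ind': "indep_vars (\<lambda>_. borel) Z (Inl ` {..<nc} \<union> Inr ` (Inl ` {..<n1} \<union> Inr ` {..<n2}))"
    using indep unfolding Z_def .
  show ?thesis
    unfolding Z_def[symmetric] setupD_def setupD_axioms_def twoP_def
    using PM p1 p2 ind' lawA lawB
    by (auto simp: marg1_def marg2_def)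
qed




lemma nu_bound:
  fixes M :: "'a measure"
    and Pc :: "((real^'d) \<times> (real^'d)) measure"
    and nc n1 n2 :: nat
    and Xc :: "nat \<Rightarrow> 'a \<Rightarrow> (real^'d) \<times> (real^'d)"
    and X1 X2 :: "nat \<Rightarrow> 'a \<Rightarrow> real^'d"
  assumes PM: "prob_space M"
    and meas_c: "\<And>j. j < nc \<Longrightarrow> Xc j \<in> borel_measurable M"
    and meas_1: "\<And>k. k < n1 \<Longrightarrow> X1 k \<in> borel_measurable M"
    and meas_2: "\<And>k. k < n2 \<Longrightarrow> X2 k \<in> borel_measurable M"
    and indep: "prob_space.indep_vars M (\<lambda>_. borel)
        (\<lambda>s \<omega>. case s of Inl j \<Rightarrow> Xc j \<omega>
                       | Inr (Inl k) \<Rightarrow> (X1 k \<omega>, X1 k \<omega>)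
                       | Inr (Inr k) \<Rightarrow> (X2 k \<omega>, X2 k \<omega>))
        (Inl ` {..<nc} \<union> Inr ` (Inl ` {..<n1} \<union> Inr ` {..<n2}))"
    and law_c: "\<And>j. j < nc \<Longrightarrow> distr M borel (Xc j) = Pc"
    and law_1: "\<And>k. k < n1 \<Longrightarrow> distr M borel (X1 k) = distr Pc borel fst"
    and law_2: "\<And>k. k < n2 \<Longrightarrow> distr M borel (X2 k) = distr Pc borel snd"
    and m1: "nc + n1 \<ge> 1" and m2: "nc + n2 \<ge> 1"
  shows "prob_space.expectation M (\<lambda>\<omega>.
            (norm (sqrt (real (nc + n1 + n2)) *\<^sub>R
                     (phat nc n1 n2 (\<lambda>j. Xc j \<omega>) (\<lambda>k. X1 k \<omega>) (\<lambda>k. X2 k \<omega>) - pvec Pc)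
                   - sqrt (real (nc + n1 + n2)) *\<^sub>R
                     Uvec Pc nc n1 n2 (\<lambda>j. Xc j \<omega>) (\<lambda>k. X1 k \<omega>) (\<lambda>k. X2 k \<omega>)))\<^sup>2)
         \<le> 24 * real CARD('d) * real (nc + n1 + n2) / (real (nc + n1) * real (nc + n2))"
proof -
  interpret prob_space M by (rule PM)
  define Z where "Z = (\<lambda>s \<omega>. case s of Inl j \<Rightarrow> Xc j \<omega>
                       | Inr (Inl k) \<Rightarrow> (X1 k \<omega>, X1 k \<omega>)
                       | Inr (Inr k) \<Rightarrow> (X2 k \<omega>, X2 k \<omega>))"
  define I :: "(nat + nat + nat) set" where "I = Inl ` {..<nc} \<union> Inr ` (Inl ` {..<n1} \<union> Inr ` {..<n2})"
  define SA :: "(nat + nat + nat) set" where "SA = Inl ` {..<nc} \<union> Inr ` Inl ` {..<n1}"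
  define SB :: "(nat + nat + nat) set" where "SB = Inl ` {..<nc} \<union> Inr ` Inr ` {..<n2}"
  define r1 where "r1 = real (nc + n1)"
  define r2 where "r2 = real (nc + n2)"
  define nn where "nn = real (nc + n1 + n2)"
  have S: "setupD M (marg1 Pc l) (marg2 Pc l) Z I SA SB (\<lambda>z. fst z $ l) (\<lambda>z. snd z $ l)" for l
    unfolding Z_def I_def SA_def SB_def
    by (rule setup_inst[OF PM meas_c meas_1 meas_2 indep law_c law_1 law_2 m1 m2])
  define G where "G = (\<lambda>l \<omega>. \<Sum>s\<in>SA. \<Sum>t\<in>SB. hh (marg1 Pc l) (marg2 Pc l) (fst (Z s \<omega>) $ l) (snd (Z t \<omega>) $ l))"
  have r1p: "r1 > 0" and r2p: "r2 > 0" using m1 m2 by (auto simp: r1_def r2_def)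
  have cA: "real (card SA) = r1" unfolding SA_def r1_def by (simp add: card_SA)
  have cB: "real (card SB) = r2" unfolding SB_def r2_def by (simp add: card_SB)
  have fA: "finite SA" and fB: "finite SB" by (auto simp: SA_def SB_def)
  have D: "phat nc n1 n2 (\<lambda>j. Xc j \<omega>) (\<lambda>k. X1 k \<omega>) (\<lambda>k. X2 k \<omega>) $ l - pvec Pc $ l
           - Uvec Pc nc n1 n2 (\<lambda>j. Xc j \<omega>) (\<lambda>k. X1 k \<omega>) (\<lambda>k. X2 k \<omega>) $ l = G l \<omega> / (r1 * r2)" for l \<omega>
  proof -
    define a where "a = (\<lambda>s. fst (Z s \<omega>) $ l)"
    define b where "b = (\<lambda>t. snd (Z t \<omega>) $ l)"
    define F1 where "F1 = normcdf (marg1 Pc l)"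
    define F2 where "F2 = normcdf (marg2 Pc l)"
    have ph: "phat nc n1 n2 (\<lambda>j. Xc j \<omega>) (\<lambda>k. X1 k \<omega>) (\<lambda>k. X2 k \<omega>) $ l
        = (\<Sum>t\<in>SB. (\<Sum>s\<in>SA. cfun (b t - a s)) / r1) / r2"
      by (simp add: SA_def SB_def sum_SA sum_SB Z_def phat_def Fhat_def Let_def a_def b_def r1_def r2_def)
    have U: "Uvec Pc nc n1 n2 (\<lambda>j. Xc j \<omega>) (\<lambda>k. X1 k \<omega>) (\<lambda>k. X2 k \<omega>) $ l
        = (\<Sum>t\<in>SB. F1 (b t)) / r2 - (\<Sum>s\<in>SA. F2 (a s)) / r1 + 1 - 2 * pvec Pc $ l"
      by (simp add: SA_def SB_def sum_SA sum_SB Z_def Uvec_def Let_def a_def b_def r1_def r2_def F1_def F2_def add_divide_distrib diff_divide_distrib)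
    have Gd: "G l \<omega> = (\<Sum>s\<in>SA. \<Sum>t\<in>SB. cfun (b t - a s) - F1 (b t) - (1 - F2 (a s)) + pvec Pc $ l)"
      by (simp add: G_def hh_def a_def b_def F1_def F2_def pvec_def)
    show ?thesis unfolding ph U Gd by (rule alg[OF fA fB cA r1p cB r2p])
  qed
  have Gm: "G l \<in> borel_measurable M" for l
    unfolding G_def using setupD.SAI[OF S] setupD.SBI[OF S]
    by (intro borel_measurable_sum setupD.hZ_meas[OF S]) auto
  have Gb: "\<bar>G l \<omega>\<bar> \<le> 2 * (r1 * r2)" for l \<omega>
  proof -
    have "\<bar>G l \<omega>\<bar> \<le> (\<Sum>s\<in>SA. \<bar>\<Sum>t\<in>SB. hh (marg1 Pc l) (marg2 Pc l) (fst (Z s \<omega>) $ l) (snd (Z t \<omega>) $ l)\<bar>)"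
      unfolding G_def by (rule sum_abs)
    also have "\<dots> \<le> (\<Sum>s\<in>SA. \<Sum>t\<in>SB. \<bar>hh (marg1 Pc l) (marg2 Pc l) (fst (Z s \<omega>) $ l) (snd (Z t \<omega>) $ l)\<bar>)"
      by (intro sum_mono sum_abs)
    also have "\<dots> \<le> (\<Sum>s\<in>SA. \<Sum>t\<in>SB. 2)"
      by (intro sum_mono twoP.hh_bound[OF setupD.axioms(2)[OF S]])
    also have "\<dots> = 2 * (r1 * r2)" using cA cB by simp
    finally show ?thesis .
  qed
  have Gi: "integrable M (\<lambda>\<omega>. (G l \<omega>)\<^sup>2)" for l
  proof (intro integrable_const_bound[where B="(2 * (r1 * r2))^2"] always_eventually allI)
    fix \<omega> have "\<bar>G l \<omega>\<bar> ^ 2 \<le> (2 * (r1 * r2))^2" by (intro power_mono Gb) auto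
    then show "norm ((G l \<omega>)\<^sup>2) \<le> (2 * (r1 * r2))^2" by simp
  qed (use Gm in auto)
  have EG: "expectation (\<lambda>\<omega>. (G l \<omega>)\<^sup>2) \<le> 24 * r1 * r2" for l
    using setupD.full_bound[OF S[of l]] cA cB unfolding G_def by simp
  have nn0: "nn \<ge> 0" by (simp add: nn_def)
  have N: "(norm (sqrt nn *\<^sub>R (phat nc n1 n2 (\<lambda>j. Xc j \<omega>) (\<lambda>k. X1 k \<omega>) (\<lambda>k. X2 k \<omega>) - pvec Pc)
                   - sqrt nn *\<^sub>R Uvec Pc nc n1 n2 (\<lambda>j. Xc j \<omega>) (\<lambda>k. X1 k \<omega>) (\<lambda>k. X2 k \<omega>)))\<^sup>2
         = (\<Sum>l\<in>UNIV. nn / (r1 * r2)^2 * (G l \<omega>)\<^sup>2)" for \<omega>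
  proof -
    have "(norm (sqrt nn *\<^sub>R (phat nc n1 n2 (\<lambda>j. Xc j \<omega>) (\<lambda>k. X1 k \<omega>) (\<lambda>k. X2 k \<omega>) - pvec Pc)
                   - sqrt nn *\<^sub>R Uvec Pc nc n1 n2 (\<lambda>j. Xc j \<omega>) (\<lambda>k. X1 k \<omega>) (\<lambda>k. X2 k \<omega>)))\<^sup>2
        = (\<Sum>l\<in>UNIV. (sqrt nn * (phat nc n1 n2 (\<lambda>j. Xc j \<omega>) (\<lambda>k. X1 k \<omega>) (\<lambda>k. X2 k \<omega>) $ l - pvec Pc $ l
           - Uvec Pc nc n1 n2 (\<lambda>j. Xc j \<omega>) (\<lambda>k. X1 k \<omega>) (\<lambda>k. X2 k \<omega>) $ l))\<^sup>2)"
      unfolding norm_sq_vec by (simp add: algebra_simps)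
    also have "\<dots> = (\<Sum>l\<in>UNIV. nn / (r1 * r2)^2 * (G l \<omega>)\<^sup>2)"
      unfolding D using nn0 by (simp add: power_mult_distrib power_divide)
    finally show ?thesis .
  qed
  have "expectation (\<lambda>\<omega>. (norm (sqrt nn *\<^sub>R (phat nc n1 n2 (\<lambda>j. Xc j \<omega>) (\<lambda>k. X1 k \<omega>) (\<lambda>k. X2 k \<omega>) - pvec Pc)
                   - sqrt nn *\<^sub>R Uvec Pc nc n1 n2 (\<lambda>j. Xc j \<omega>) (\<lambda>k. X1 k \<omega>) (\<lambda>k. X2 k \<omega>)))\<^sup>2)
      = (\<Sum>l\<in>UNIV. nn / (r1 * r2)^2 * expectation (\<lambda>\<omega>. (G l \<omega>)\<^sup>2))"
    unfolding N by (simp add: Bochner_Integration.integral_sum Gi)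
  also have "\<dots> \<le> (\<Sum>l\<in>(UNIV::'d set). nn / (r1 * r2)^2 * (24 * r1 * r2))"
    using nn0 r1p r2p by (intro sum_mono mult_left_mono EG) auto
  also have "\<dots> = 24 * real CARD('d) * nn / (r1 * r2)"
    using r1p r2p by (simp add: power2_eq_square field_simps)
  finally show ?thesis unfolding nn_def r1_def r2_def .
qed




theorem theorem4p2:
  fixes M :: "'a measure"
    and Pc :: "((real^'d) \<times> (real^'d)) measure"
    and nc n1 n2 :: "nat \<Rightarrow> nat"
    and Xc :: "nat \<Rightarrow> nat \<Rightarrow> 'a \<Rightarrow> (real^'d) \<times> (real^'d)"
    and X1 X2 :: "nat \<Rightarrow> nat \<Rightarrow> 'a \<Rightarrow> real^'d"
    and N0 :: real
  assumes "prob_space M"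
    and meas_c: "\<And>\<nu> j. j < nc \<nu> \<Longrightarrow> Xc \<nu> j \<in> borel_measurable M"
    and meas_1: "\<And>\<nu> k. k < n1 \<nu> \<Longrightarrow> X1 \<nu> k \<in> borel_measurable M"
    and meas_2: "\<And>\<nu> k. k < n2 \<nu> \<Longrightarrow> X2 \<nu> k \<in> borel_measurable M"
    and indep: "\<And>\<nu>. prob_space.indep_vars M (\<lambda>_. borel)
        (\<lambda>s \<omega>. case s of Inl j \<Rightarrow> Xc \<nu> j \<omega>
                       | Inr (Inl k) \<Rightarrow> (X1 \<nu> k \<omega>, X1 \<nu> k \<omega>)
                       | Inr (Inr k) \<Rightarrow> (X2 \<nu> k \<omega>, X2 \<nu> k \<omega>))
        (Inl ` {..<nc \<nu>} \<union> Inr ` (Inl ` {..<n1 \<nu>} \<union> Inr ` {..<n2 \<nu>}))"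
    and law_c: "\<And>\<nu> j. j < nc \<nu> \<Longrightarrow> distr M borel (Xc \<nu> j) = Pc"
    and law_1: "\<And>\<nu> k. k < n1 \<nu> \<Longrightarrow> distr M borel (X1 \<nu> k) = distr Pc borel fst"
    and law_2: "\<And>\<nu> k. k < n2 \<nu> \<Longrightarrow> distr M borel (X2 \<nu> k) = distr Pc borel snd"
    and nondeg1: "\<And>l c. measure (marg1 Pc l) {c} < 1"
    and nondeg2: "\<And>l c. measure (marg2 Pc l) {c} < 1"
    and A1_lim1: "filterlim (\<lambda>\<nu>. nc \<nu> + n1 \<nu>) at_top sequentially"
    and A1_lim2: "filterlim (\<lambda>\<nu>. nc \<nu> + n2 \<nu>) at_top sequentially"
    and A1_bd1: "\<And>\<nu>. real (nc \<nu> + n1 \<nu> + n2 \<nu>) / real (nc \<nu> + n1 \<nu>) \<le> N0"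
    and A1_bd2: "\<And>\<nu>. real (nc \<nu> + n1 \<nu> + n2 \<nu>) / real (nc \<nu> + n2 \<nu>) \<le> N0"
  shows "(\<lambda>\<nu>. prob_space.expectation M (\<lambda>\<omega>.
            (norm (sqrt (real (nc \<nu> + n1 \<nu> + n2 \<nu>)) *\<^sub>R
                     (phat (nc \<nu>) (n1 \<nu>) (n2 \<nu>) (\<lambda>j. Xc \<nu> j \<omega>) (\<lambda>k. X1 \<nu> k \<omega>) (\<lambda>k. X2 \<nu> k \<omega>) - pvec Pc)
                   - sqrt (real (nc \<nu> + n1 \<nu> + n2 \<nu>)) *\<^sub>R
                     Uvec Pc (nc \<nu>) (n1 \<nu>) (n2 \<nu>) (\<lambda>j. Xc \<nu> j \<omega>) (\<lambda>k. X1 \<nu> k \<omega>) (\<lambda>k. X2 \<nu> k \<omega>)))\<^sup>2))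
         \<longlonglongrightarrow> 0"
proof -
  interpret prob_space M by fact
  define E where "E = (\<lambda>\<nu>. prob_space.expectation M (\<lambda>\<omega>.
            (norm (sqrt (real (nc \<nu> + n1 \<nu> + n2 \<nu>)) *\<^sub>R
                     (phat (nc \<nu>) (n1 \<nu>) (n2 \<nu>) (\<lambda>j. Xc \<nu> j \<omega>) (\<lambda>k. X1 \<nu> k \<omega>) (\<lambda>k. X2 \<nu> k \<omega>) - pvec Pc)
                   - sqrt (real (nc \<nu> + n1 \<nu> + n2 \<nu>)) *\<^sub>R
                     Uvec Pc (nc \<nu>) (n1 \<nu>) (n2 \<nu>) (\<lambda>j. Xc \<nu> j \<omega>) (\<lambda>k. X1 \<nu> k \<omega>) (\<lambda>k. X2 \<nu> k \<omega>)))\<^sup>2))"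
  have ev1: "eventually (\<lambda>\<nu>. nc \<nu> + n1 \<nu> \<ge> 1) sequentially"
    using A1_lim1 by (simp add: filterlim_at_top)
  have ev2: "eventually (\<lambda>\<nu>. nc \<nu> + n2 \<nu> \<ge> 1) sequentially"
    using A1_lim2 by (simp add: filterlim_at_top)
  have lim2: "filterlim (\<lambda>\<nu>. real (nc \<nu> + n2 \<nu>)) at_infinity sequentially"
    by (rule filterlim_at_top_imp_at_infinity[OF filterlim_compose[OF filterlim_real_sequentially A1_lim2]])
  have up: "(\<lambda>\<nu>. 24 * real CARD('d) * N0 / real (nc \<nu> + n2 \<nu>)) \<longlonglongrightarrow> 0"
    by (rule tendsto_divide_0[OF tendsto_const lim2])
  have "E \<longlonglongrightarrow> 0"
  proof (rule real_tendsto_sandwich[OF _ _ tendsto_const up])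
    show "eventually (\<lambda>\<nu>. 0 \<le> E \<nu>) sequentially"
      by (simp add: E_def)
    show "eventually (\<lambda>\<nu>. E \<nu> \<le> 24 * real CARD('d) * N0 / real (nc \<nu> + n2 \<nu>)) sequentially"
      using ev1 ev2
    proof eventually_elim
      case (elim \<nu>)
      have "E \<nu> \<le> 24 * real CARD('d) * real (nc \<nu> + n1 \<nu> + n2 \<nu>) / (real (nc \<nu> + n1 \<nu>) * real (nc \<nu> + n2 \<nu>))"
        unfolding E_def
        by (rule nu_bound[OF assms(1) meas_c meas_1 meas_2 indep law_c law_1 law_2 elim])
      also have "\<dots> = 24 * real CARD('d) * (real (nc \<nu> + n1 \<nu> + n2 \<nu>) / real (nc \<nu> + n1 \<nu>)) / real (nc \<nu> + n2 \<nu>)"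
        by simp
      also have "\<dots> \<le> 24 * real CARD('d) * N0 / real (nc \<nu> + n2 \<nu>)"
        by (intro divide_right_mono mult_left_mono A1_bd1) auto
      finally show ?case .
    qed
  qed
  then show ?thesis unfolding E_def .
qed


end
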